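(* Let $\ell\geq 1$ be an integer. For $\kappa\in\{1,\ldots,\ell+1\}$ let $A^{[\kappa]}\in M_\ell(\mathbb{R})$ be the matrix obtained from the $\ell\times(\ell+1)$ matrix with entries $\big((i-1)(\ell+1)+j\big)^{\ell-1}$ ($1\leq i\leq \ell$, $1\leq j\leq \ell+1$) by deleting its $\kappa$-th column; equivalently $(A^{[\kappa]})_{ij}=\big((i-1)(\ell+1)+r^{[\kappa]}_j\big)^{\ell-1}$ with $r^{[\kappa]}_j=j$ for $1\leq j\leq\kappa-1$ and $r^{[\kappa]}_j=j+1$ for $\kappa\leq j\leq \ell$. Then there exists a number $\sigma_\ell$ depending only on $\ell$ such that for all $\kappa\in\{1,\ldots,\ell+1\}$ \[ \det(A^{[\kappa]})=(-1)^\ell\sigma_\ell\binom{\ell}{\kappa-1}. \] *)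

theory Defs
  imports "Jordan_Normal_Form.Determinant"
begin

definition col_shift :: "nat \<Rightarrow> nat \<Rightarrow> nat" where
  "col_shift \<kappa> j = (if j \<le> \<kappa> - 1 then j else j + 1)"

text \<open>The l x l real matrix A^[kappa]; Isabelle indices i, j are 0-based, so the
  1-based row index is i+1 and the 1-based column index is j+1.\<close>
definition A_mat :: "nat \<Rightarrow> nat \<Rightarrow> real mat" where
  "A_mat l \<kappa> = mat l l (\<lambda>(i, j). real (i * (l + 1) + col_shift \<kappa> (j + 1)) ^ (l - 1))"

end

theory Submission
  imports Defs
begin

lemma pascal_sum:
  fixes g :: "nat \<Rightarrow> real"
  shows "(\<Sum>c\<le>Suc l. (-1)^c * real (Suc l choose c) * g c)
       = (\<Sum>c\<le>l. (-1)^c * real (l choose c) * (g c - g (Suc c)))"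
proof -
  have e: "real (Suc l choose c) = real (l choose c) + (if c = 0 then 0 else real (l choose (c - 1)))" for c
    by (cases c) auto
  have "(\<Sum>c\<le>Suc l. (-1)^c * real (Suc l choose c) * g c)
     = (\<Sum>c\<le>Suc l. (-1)^c * real (l choose c) * g c)
       + (\<Sum>c\<le>Suc l. (-1)^c * (if c = 0 then 0 else real (l choose (c - 1))) * g c)"
    unfolding e by (simp add: algebra_simps sum.distrib)
  also have "(\<Sum>c\<le>Suc l. (-1)^c * real (l choose c) * g c) = (\<Sum>c\<le>l. (-1)^c * real (l choose c) * g c)"
    by simp
  also have "(\<Sum>c\<le>Suc l. (-1)^c * (if c = 0 then 0 else real (l choose (c - 1))) * g c)
      = (\<Sum>c\<le>l. (-1)^(Suc c) * real (l choose c) * g (Suc c))"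
    by (subst sum.atMost_Suc_shift) simp
  finally show ?thesis by (simp add: sum.distrib[symmetric] algebra_simps sum_subtractf)
qed

lemma fd:
  "m < l \<Longrightarrow> (\<Sum>c\<le>l. (-1)^c * real (l choose c) * (a + real c)^m) = 0"
proof (induction l arbitrary: m)
  case 0
  then show ?case by simp
next
  case (Suc l)
  have d: "(a + real c)^m - (a + real (Suc c))^m = - (\<Sum>k<m. real (m choose k) * (a + real c)^k)" for c
  proof -
    have "(a + real (Suc c))^m = ((a + real c) + 1)^m" by (simp add: add_ac)
    also have "\<dots> = (\<Sum>k\<le>m. real (m choose k) * (a + real c)^k)"
      by (subst binomial_ring) simp
    also have "\<dots> = (\<Sum>k<m. real (m choose k) * (a + real c)^k) + (a + real c)^m"
      by (simp add: lessThan_Suc_atMost[symmetric])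
    finally show ?thesis by simp
  qed
  have "(\<Sum>c\<le>Suc l. (-1)^c * real (Suc l choose c) * (a + real c)^m)
      = (\<Sum>c\<le>l. (-1)^c * real (l choose c) * ((a + real c)^m - (a + real (Suc c))^m))"
    by (rule pascal_sum)
  also have "\<dots> = - (\<Sum>k<m. real (m choose k) * (\<Sum>c\<le>l. (-1)^c * real (l choose c) * (a + real c)^k))"
    unfolding d by (simp add: sum_distrib_left sum_negf algebra_simps sum.swap[of _ "{..<m}"])
  also have "\<dots> = 0"
    using Suc.IH Suc.prems by simp
  finally show ?case .
qed


definition G :: "nat \<Rightarrow> (nat \<Rightarrow> nat) \<Rightarrow> real mat" where
  "G l f = mat l l (\<lambda>(i, j). real (i * (l + 1) + f j) ^ (l - 1))"

lemma step:
  assumes k1: "1 \<le> \<kappa>" and kl: "\<kappa> \<le> l"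
  shows "real (l choose (\<kappa> - 1)) * det (A_mat l (Suc \<kappa>)) = real (l choose \<kappa>) * det (A_mat l \<kappa>)"
proof -
  define s where "s = (\<lambda>j. col_shift \<kappa> (j + 1))"
  define j0 where "j0 = \<kappa> - 1"
  define B where "B = (\<lambda>c. G l (s(j0 := c)))"
  have j0l: "j0 < l" using k1 kl by (simp add: j0_def)
  have Bc: "B c \<in> carrier_mat l l" for c by (simp add: B_def G_def)
  have A1: "A_mat l \<kappa> = B (Suc \<kappa>)"
    unfolding B_def G_def A_mat_def
    by (rule eq_matI) (use k1 in \<open>auto simp: s_def j0_def col_shift_def\<close>)
  have A2: "A_mat l (Suc \<kappa>) = B \<kappa>"
    unfolding B_def G_def A_mat_def
    by (rule eq_matI) (use k1 in \<open>auto simp: s_def j0_def col_shift_def\<close>)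
  define Cf where "Cf = (\<lambda>i. cofactor (B 0) i j0)"
  have cof: "cofactor (B c) i j0 = Cf i" for c i
    unfolding Cf_def cofactor_def
    by (rule arg_cong[where f="\<lambda>M. (-1)^(i+j0) * det M"], unfold mat_delete_def B_def G_def)
       (rule eq_matI, auto)
  have entry: "i < l \<Longrightarrow> B c $$ (i, j0) = real (i * (l + 1) + c) ^ (l - 1)" for i c
    using j0l by (simp add: B_def G_def)
  have detB: "det (B c) = (\<Sum>i<l. real (i * (l + 1) + c) ^ (l - 1) * Cf i)" for c
  proof -
    have "det (B c) = (\<Sum>i<l. B c $$ (i, j0) * cofactor (B c) i j0)"
      by (rule laplace_expansion_column[OF Bc j0l])
    also have "\<dots> = (\<Sum>i<l. real (i * (l + 1) + c) ^ (l - 1) * Cf i)"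
      using j0l by (intro sum.cong) (auto simp: cof entry)
    finally show ?thesis .
  qed
  have zero: "(\<Sum>c\<le>l. (-1)^c * real (l choose c) * det (B (Suc c))) = 0"
  proof -
    have "(\<Sum>c\<le>l. (-1)^c * real (l choose c) * det (B (Suc c)))
       = (\<Sum>i<l. Cf i * (\<Sum>c\<le>l. (-1)^c * real (l choose c) * (real (i * (l + 1) + 1) + real c) ^ (l - 1)))"
      unfolding detB by (simp add: sum_distrib_left sum.swap[of _ "{..<l}"] algebra_simps)
    also have "\<dots> = 0"
      using kl k1 by (simp add: fd)
    finally show ?thesis .
  qed
  have vanish: "det (B (Suc c)) = 0" if "c \<le> l" "Suc c \<noteq> \<kappa>" "c \<noteq> \<kappa>" for c
  proof -
    obtain j' where j': "j' < l" "j' \<noteq> j0" "s j' = Suc c"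
    proof (cases "Suc c < \<kappa>")
      case True
      then show ?thesis using that(1) kl
        by (intro that[of c]) (auto simp: j0_def s_def col_shift_def)
    next
      case False
      then have "c > \<kappa>" using \<open>Suc c \<noteq> \<kappa>\<close> \<open>c \<noteq> \<kappa>\<close> by simp
      then show ?thesis using \<open>c \<le> l\<close> k1
        by (intro that[of "c - 1"]) (auto simp: j0_def s_def col_shift_def)
    qed
    show ?thesis
    proof (rule det_identical_columns[OF Bc j'(2)[symmetric] j0l j'(1)])
      show "col (B (Suc c)) j0 = col (B (Suc c)) j'"
        using j' j0l by (intro eq_vecI) (auto simp: B_def G_def)
    qed
  qed
  let ?h = "\<lambda>c. (-1)^c * real (l choose c) * det (B (Suc c))"
  have "(\<Sum>c\<in>{\<kappa> - 1, \<kappa>}. ?h c) = (\<Sum>c\<le>l. ?h c)"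
    by (rule sum.mono_neutral_left) (use kl k1 in \<open>auto intro!: vanish\<close>)
  then have "?h (\<kappa> - 1) + ?h \<kappa> = 0" using zero k1 by simp
  moreover have "(-1::real)^\<kappa> = - ((-1)^(\<kappa> - 1))"
    using k1 by (cases \<kappa>) auto
  ultimately have "real (l choose (\<kappa> - 1)) * det (B \<kappa>) = real (l choose \<kappa>) * det (B (Suc \<kappa>))"
    using k1 by (simp add: algebra_simps)
  then show ?thesis using A1 A2 by simp
qed

theorem proposition3:
  fixes l :: nat
  assumes "l \<ge> 1"
  shows "\<exists>\<sigma> :: real. \<forall>\<kappa> \<in> {1..l+1}.
           det (A_mat l \<kappa>) = (-1) ^ l * \<sigma> * real (l choose (\<kappa> - 1))"
proof -
  define d where "d = det (A_mat l 1)"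
  have main: "1 \<le> \<kappa> \<Longrightarrow> \<kappa> \<le> l + 1 \<Longrightarrow> det (A_mat l \<kappa>) = d * real (l choose (\<kappa> - 1))" for \<kappa>
  proof (induction \<kappa>)
    case 0 then show ?case by simp
  next
    case (Suc k)
    show ?case
    proof (cases "k = 0")
      case True then show ?thesis by (simp add: d_def)
    next
      case False
      then have k1: "1 \<le> k" and kl: "k \<le> l" using Suc.prems by auto
      have IH: "det (A_mat l k) = d * real (l choose (k - 1))" using Suc.IH k1 kl by simp
      have nz: "real (l choose (k - 1)) \<noteq> 0" using kl by simp
      have "real (l choose (k - 1)) * det (A_mat l (Suc k)) = real (l choose (k - 1)) * (d * real (l choose k))"
        using step[OF k1 kl] IH by (simp add: algebra_simps)
      then show ?thesis using nz by simp
    qed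
  qed
  show ?thesis
  proof (intro exI[of _ "(-1)^l * d"] ballI)
    fix \<kappa> assume "\<kappa> \<in> {1..l+1}"
    then show "det (A_mat l \<kappa>) = (-1) ^ l * ((-1)^l * d) * real (l choose (\<kappa> - 1))"
      using main by (simp add: power_mult_distrib[symmetric] mult.assoc[symmetric] flip: power_add)
  qed
qed

end
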